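(* Let $T$ be a square-integrable real random variable and let $X$ and $Y$ be independent random variables (on the same probability space as $T$). Then $L^r_T(X)+L^r_T(Y)=L^r_T(X,Y)$.
   Context: For random variables $Z_1,\dots,Z_k$, the restricted (additive, GAM-type) predictive power of $(Z_1,\dots,Z_k)$ for $T$ is $$L^r_T(Z_1,\dots,Z_k)=\sigma^2(T)-\inf\Bigl\{\sigma^2\Bigl(T-\sum_{i=1}^k f_i(Z_i)\Bigr)\ :\ f_i \text{ measurable},\ E[f_i(Z_i)^2]<\infty\Bigr\},$$ i.e. $\sigma^2(T)-\sigma^2(T-E^r[T\mid Z_1,\dots,Z_k])$ where $E^r[T\mid Z_1,\dots,Z_k]$ is the minimum-variance predictor of $T$ among (the $L^2$-closure of) sums of square-integrable functions of the individual $Z_i$. For a single variable this coincides with $\sigma^2(T)-\sigma^2(T-E[T\mid Z_1])$. $\sigma^2$ denotes variance. *)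

theory Defs
  imports "HOL-Probability.Probability"
begin

definition sq_int_fun :: "'a measure \<Rightarrow> 'b measure \<Rightarrow> ('a \<Rightarrow> 'b) \<Rightarrow> ('b \<Rightarrow> real) \<Rightarrow> bool" where
  "sq_int_fun M N Z f \<longleftrightarrow> f \<in> borel_measurable N \<and> integrable M (\<lambda>\<omega>. (f (Z \<omega>))\<^sup>2)"

definition Lr1 :: "'a measure \<Rightarrow> ('a \<Rightarrow> real) \<Rightarrow> 'b measure \<Rightarrow> ('a \<Rightarrow> 'b) \<Rightarrow> real" where
  "Lr1 M T N Z = prob_space.variance M T -
     (INF f \<in> {f. sq_int_fun M N Z f}. prob_space.variance M (\<lambda>\<omega>. T \<omega> - f (Z \<omega>)))"

definition Lr2 :: "'a measure \<Rightarrow> ('a \<Rightarrow> real) \<Rightarrow> 'b measure \<Rightarrow> ('a \<Rightarrow> 'b) \<Rightarrow> 'c measure \<Rightarrow> ('a \<Rightarrow> 'c) \<Rightarrow> real" where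
  "Lr2 M T N1 Z1 N2 Z2 = prob_space.variance M T -
     (INF fg \<in> {(f, g). sq_int_fun M N1 Z1 f \<and> sq_int_fun M N2 Z2 g}.
        prob_space.variance M (\<lambda>\<omega>. T \<omega> - fst fg (Z1 \<omega>) - snd fg (Z2 \<omega>)))"

text \<open>Independence of two random variables with possibly different codomains
  (the library's indep_var requires a common codomain type):
  P(X in A, Y in B) = P(X in A) P(Y in B) for all measurable A, B.\<close>
definition indep_rv :: "'a measure \<Rightarrow> 'b measure \<Rightarrow> ('a \<Rightarrow> 'b) \<Rightarrow> 'c measure \<Rightarrow> ('a \<Rightarrow> 'c) \<Rightarrow> bool" where
  "indep_rv M N1 X N2 Y \<longleftrightarrow>
     (\<forall>A\<in>sets N1. \<forall>B\<in>sets N2.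
        measure M (X -` A \<inter> Y -` B \<inter> space M) = measure M (X -` A \<inter> space M) * measure M (Y -` B \<inter> space M))"

end

theory Submission
  imports Defs
begin

lemma inf_sum:
  fixes a :: "'x \<Rightarrow> real" and b :: "'y \<Rightarrow> real"
  assumes "A \<noteq> {}" "B \<noteq> {}" "\<And>x. x \<in> A \<Longrightarrow> 0 \<le> a x" "\<And>y. y \<in> B \<Longrightarrow> 0 \<le> b y"
  shows "(INF p \<in> A \<times> B. a (fst p) + b (snd p) - c) = (INF x\<in>A. a x) + (INF y\<in>B. b y) - c"
proof -
  have bA: "bdd_below (a ` A)" using assms(3) by (intro bdd_belowI[of _ 0]) auto
  have bB: "bdd_below (b ` B)" using assms(4) by (intro bdd_belowI[of _ 0]) auto
  have lo: "(INF x\<in>A. a x) + (INF y\<in>B. b y) - c \<le> a (fst p) + b (snd p) - c" if "p \<in> A \<times> B" for p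
    using cINF_lower[OF bA, of "fst p"] cINF_lower[OF bB, of "snd p"] that by auto
  have bP: "bdd_below ((\<lambda>p. a (fst p) + b (snd p) - c) ` (A \<times> B))"
    using lo by (intro bdd_belowI[of _ "(INF x\<in>A. a x) + (INF y\<in>B. b y) - c"]) auto
  let ?I = "INF p \<in> A \<times> B. a (fst p) + b (snd p) - c"
  have ge: "(INF x\<in>A. a x) + (INF y\<in>B. b y) - c \<le> ?I"
    using assms by (intro cINF_greatest lo) auto
  have "?I + c - (INF y\<in>B. b y) \<le> (INF x\<in>A. a x)"
  proof (rule cINF_greatest)
    show "A \<noteq> {}" by fact
    fix x assume x: "x \<in> A"
    have "?I + c - a x \<le> (INF y\<in>B. b y)"
    proof (rule cINF_greatest)
      show "B \<noteq> {}" by fact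
      fix y assume y: "y \<in> B"
      have "?I \<le> a (fst (x, y)) + b (snd (x, y)) - c"
        using x y by (intro cINF_lower[OF bP]) auto
      then show "?I + c - a x \<le> b y" by simp
    qed
    then show "?I + c - (INF y\<in>B. b y) \<le> a x" by simp
  qed
  with ge show ?thesis by simp
qed

context prob_space
begin

lemma sq_prod_int:
  fixes a b :: "'a \<Rightarrow> real"
  assumes [measurable]: "a \<in> borel_measurable M" "b \<in> borel_measurable M"
    and "integrable M (\<lambda>x. (a x)\<^sup>2)" "integrable M (\<lambda>x. (b x)\<^sup>2)"
  shows "integrable M (\<lambda>x. a x * b x)"
proof (rule Bochner_Integration.integrable_bound[where f="\<lambda>x. (a x)\<^sup>2 + (b x)\<^sup>2"])
  show "integrable M (\<lambda>x. (a x)\<^sup>2 + (b x)\<^sup>2)" using assms by auto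
  show "AE x in M. norm (a x * b x) \<le> norm ((a x)\<^sup>2 + (b x)\<^sup>2)"
  proof (rule AE_I2)
    fix x
    have "0 \<le> (\<bar>a x\<bar> - \<bar>b x\<bar>)\<^sup>2" by simp
    then have 1: "2 * \<bar>a x\<bar> * \<bar>b x\<bar> \<le> (a x)\<^sup>2 + (b x)\<^sup>2"
      by (simp add: power2_diff)
    have "0 \<le> \<bar>a x\<bar> * \<bar>b x\<bar>" by simp
    with 1 have "\<bar>a x\<bar> * \<bar>b x\<bar> \<le> (a x)\<^sup>2 + (b x)\<^sup>2"
      by linarith
    then have "\<bar>a x * b x\<bar> \<le> (a x)\<^sup>2 + (b x)\<^sup>2"
      by (simp add: abs_mult)
    then show "norm (a x * b x) \<le> norm ((a x)\<^sup>2 + (b x)\<^sup>2)" by simp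
  qed
qed simp

lemma sq_int_int:
  fixes a :: "'a \<Rightarrow> real"
  assumes [measurable]: "a \<in> borel_measurable M" and "integrable M (\<lambda>x. (a x)\<^sup>2)"
  shows "integrable M a"
  using square_integrable_imp_integrable assms by blast

lemma var_decomp:
  fixes T F G :: "'a \<Rightarrow> real"
  assumes [measurable]: "T \<in> borel_measurable M" "F \<in> borel_measurable M" "G \<in> borel_measurable M"
    and iT: "integrable M (\<lambda>x. (T x)\<^sup>2)" and iF: "integrable M (\<lambda>x. (F x)\<^sup>2)"
    and iG: "integrable M (\<lambda>x. (G x)\<^sup>2)"
    and ind: "expectation (\<lambda>x. F x * G x) = expectation F * expectation G"
  shows "variance (\<lambda>x. T x - F x - G x) = variance (\<lambda>x. T x - F x) + variance (\<lambda>x. T x - G x) - variance T"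
proof -
  have [simp]: "integrable M T" "integrable M F" "integrable M G"
    using sq_int_int[OF assms(1) iT] sq_int_int[OF assms(2) iF] sq_int_int[OF assms(3) iG] by blast+
  have [simp]: "integrable M (\<lambda>x. T x * F x)" "integrable M (\<lambda>x. T x * G x)" "integrable M (\<lambda>x. F x * G x)"
    using sq_prod_int[OF assms(1,2) iT iF] sq_prod_int[OF assms(1,3) iT iG] sq_prod_int[OF assms(2,3) iF iG] by blast+
  note [simp] = iT iF iG
  have e1: "(\<lambda>x. (T x - F x - G x)\<^sup>2) = (\<lambda>x. (T x)\<^sup>2 + (F x)\<^sup>2 + (G x)\<^sup>2 - 2 * (T x * F x) - 2 * (T x * G x) + 2 * (F x * G x))"
    by (auto simp: power2_eq_square algebra_simps)
  have e2: "(\<lambda>x. (T x - F x)\<^sup>2) = (\<lambda>x. (T x)\<^sup>2 + (F x)\<^sup>2 - 2 * (T x * F x))"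
    by (auto simp: power2_eq_square algebra_simps)
  have e3: "(\<lambda>x. (T x - G x)\<^sup>2) = (\<lambda>x. (T x)\<^sup>2 + (G x)\<^sup>2 - 2 * (T x * G x))"
    by (auto simp: power2_eq_square algebra_simps)
  have i1: "integrable M (\<lambda>x. (T x - F x - G x)\<^sup>2)" unfolding e1 by simp
  have i2: "integrable M (\<lambda>x. (T x - F x)\<^sup>2)" unfolding e2 by simp
  have i3: "integrable M (\<lambda>x. (T x - G x)\<^sup>2)" unfolding e3 by simp
  have v1: "variance (\<lambda>x. T x - F x - G x) = expectation (\<lambda>x. (T x - F x - G x)\<^sup>2) - (expectation (\<lambda>x. T x - F x - G x))\<^sup>2"
    by (rule variance_eq) (simp_all add: i1)
  have v2: "variance (\<lambda>x. T x - F x) = expectation (\<lambda>x. (T x - F x)\<^sup>2) - (expectation (\<lambda>x. T x - F x))\<^sup>2"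
    by (rule variance_eq) (simp_all add: i2)
  have v3: "variance (\<lambda>x. T x - G x) = expectation (\<lambda>x. (T x - G x)\<^sup>2) - (expectation (\<lambda>x. T x - G x))\<^sup>2"
    by (rule variance_eq) (simp_all add: i3)
  have v4: "variance T = expectation (\<lambda>x. (T x)\<^sup>2) - (expectation T)\<^sup>2"
    by (rule variance_eq) simp_all
  have x1: "expectation (\<lambda>x. (T x - F x - G x)\<^sup>2) = expectation (\<lambda>x. (T x)\<^sup>2) + expectation (\<lambda>x. (F x)\<^sup>2) + expectation (\<lambda>x. (G x)\<^sup>2) - 2 * expectation (\<lambda>x. T x * F x) - 2 * expectation (\<lambda>x. T x * G x) + 2 * expectation (\<lambda>x. F x * G x)"
    unfolding e1 by simp
  have x2: "expectation (\<lambda>x. (T x - F x)\<^sup>2) = expectation (\<lambda>x. (T x)\<^sup>2) + expectation (\<lambda>x. (F x)\<^sup>2) - 2 * expectation (\<lambda>x. T x * F x)"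
    unfolding e2 by simp
  have x3: "expectation (\<lambda>x. (T x - G x)\<^sup>2) = expectation (\<lambda>x. (T x)\<^sup>2) + expectation (\<lambda>x. (G x)\<^sup>2) - 2 * expectation (\<lambda>x. T x * G x)"
    unfolding e3 by simp
  have y1: "expectation (\<lambda>x. T x - F x - G x) = expectation T - expectation F - expectation G" by simp
  have y2: "expectation (\<lambda>x. T x - F x) = expectation T - expectation F" by simp
  have y3: "expectation (\<lambda>x. T x - G x) = expectation T - expectation G" by simp
  show ?thesis
    unfolding v1 unfolding v2 unfolding v3 unfolding v4
    unfolding x1 x2 x3 y1 y2 y3 ind
    by (simp add: power2_eq_square algebra_simps)
qed

lemma indep_comp:
  fixes f :: "'b \<Rightarrow> real" and g :: "'c \<Rightarrow> real"
  assumes X: "X \<in> measurable M N1" and Y: "Y \<in> measurable M N2"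
    and f: "f \<in> borel_measurable N1" and g: "g \<in> borel_measurable N2"
    and ind: "indep_rv M N1 X N2 Y"
  shows "indep_var borel (\<lambda>\<omega>. f (X \<omega>)) borel (\<lambda>\<omega>. g (Y \<omega>))"
proof -
  have F: "(\<lambda>\<omega>. f (X \<omega>)) \<in> borel_measurable M" using measurable_compose[OF X f] by (simp add: comp_def)
  have G: "(\<lambda>\<omega>. g (Y \<omega>)) \<in> borel_measurable M" using measurable_compose[OF Y g] by (simp add: comp_def)
  let ?A = "{(\<lambda>\<omega>. f (X \<omega>)) -` A \<inter> space M | A. A \<in> sets borel}"
  let ?B = "{(\<lambda>\<omega>. g (Y \<omega>)) -` A \<inter> space M | A. A \<in> sets borel}"
  have sA: "Int_stable ?A"
    unfolding Int_stable_def
  proof (intro ballI)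
    fix a b assume "a \<in> ?A" "b \<in> ?A"
    then obtain A B where "a = (\<lambda>\<omega>. f (X \<omega>)) -` A \<inter> space M" "b = (\<lambda>\<omega>. f (X \<omega>)) -` B \<inter> space M"
      "A \<in> sets borel" "B \<in> sets borel" by blast
    then show "a \<inter> b \<in> ?A" by (intro CollectI exI[of _ "A \<inter> B"]) auto
  qed
  have sB: "Int_stable ?B"
    unfolding Int_stable_def
  proof (intro ballI)
    fix a b assume "a \<in> ?B" "b \<in> ?B"
    then obtain A B where "a = (\<lambda>\<omega>. g (Y \<omega>)) -` A \<inter> space M" "b = (\<lambda>\<omega>. g (Y \<omega>)) -` B \<inter> space M"
      "A \<in> sets borel" "B \<in> sets borel" by blast
    then show "a \<inter> b \<in> ?B" by (intro CollectI exI[of _ "A \<inter> B"]) auto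
  qed
  have "indep_set ?A ?B"
    unfolding indep_sets2_eq
  proof (intro conjI ballI)
    show "?A \<subseteq> events" using F by (auto simp: measurable_sets)
    show "?B \<subseteq> events" using G by (auto simp: measurable_sets)
    fix a b assume "a \<in> ?A" "b \<in> ?B"
    then obtain A B where a: "a = (\<lambda>\<omega>. f (X \<omega>)) -` A \<inter> space M" and b: "b = (\<lambda>\<omega>. g (Y \<omega>)) -` B \<inter> space M"
      and AB: "A \<in> sets borel" "B \<in> sets borel" by blast
    let ?A' = "f -` A \<inter> space N1" and ?B' = "g -` B \<inter> space N2"
    have A': "?A' \<in> sets N1" using f AB by (auto simp: measurable_sets)
    have B': "?B' \<in> sets N2" using g AB by (auto simp: measurable_sets)
    have XA: "X -` ?A' \<inter> space M = a" using a X by (auto simp: measurable_space)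
    have YB: "Y -` ?B' \<inter> space M = b" using b Y by (auto simp: measurable_space)
    have XYAB: "X -` ?A' \<inter> Y -` ?B' \<inter> space M = a \<inter> b" using XA YB by blast
    from ind A' B' have "measure M (X -` ?A' \<inter> Y -` ?B' \<inter> space M) = measure M (X -` ?A' \<inter> space M) * measure M (Y -` ?B' \<inter> space M)"
      unfolding indep_rv_def by blast
    then show "prob (a \<inter> b) = prob a * prob b" unfolding XYAB XA YB .
  qed
  then have "indep_set (sigma_sets (space M) ?A) (sigma_sets (space M) ?B)"
    using sA sB by (rule indep_set_sigma_sets)
  then show ?thesis
    unfolding indep_var_eq using F G by simp
qed

end

theorem theorem1:
  fixes M :: "'a measure" and T :: "'a \<Rightarrow> real"
    and N1 :: "'b measure" and X :: "'a \<Rightarrow> 'b"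
    and N2 :: "'c measure" and Y :: "'a \<Rightarrow> 'c"
  assumes "prob_space M"
    and "T \<in> borel_measurable M" and "integrable M (\<lambda>\<omega>. (T \<omega>)\<^sup>2)"
    and "X \<in> measurable M N1" and "Y \<in> measurable M N2"
    and "indep_rv M N1 X N2 Y"
  shows "Lr1 M T N1 X + Lr1 M T N2 Y = Lr2 M T N1 X N2 Y"
proof -
  interpret prob_space M by fact
  define S1 where "S1 = {f. sq_int_fun M N1 X f}"
  define S2 where "S2 = {g. sq_int_fun M N2 Y g}"
  define v1 where "v1 f = variance (\<lambda>\<omega>. T \<omega> - f (X \<omega>))" for f :: "'b \<Rightarrow> real"
  define v2 where "v2 g = variance (\<lambda>\<omega>. T \<omega> - g (Y \<omega>))" for g :: "'c \<Rightarrow> real"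
  have n1: "S1 \<noteq> {}" unfolding S1_def sq_int_fun_def
    by (intro ex_in_conv[THEN iffD1] exI[of _ "\<lambda>_. 0"]) auto
  have n2: "S2 \<noteq> {}" unfolding S2_def sq_int_fun_def
    by (intro ex_in_conv[THEN iffD1] exI[of _ "\<lambda>_. 0"]) auto
  have dec: "variance (\<lambda>\<omega>. T \<omega> - f (X \<omega>) - g (Y \<omega>)) = v1 f + v2 g - variance T"
    if f: "f \<in> S1" and g: "g \<in> S2" for f g
  proof -
    have fm: "f \<in> borel_measurable N1" and fi: "integrable M (\<lambda>\<omega>. (f (X \<omega>))\<^sup>2)"
      using f unfolding S1_def sq_int_fun_def by auto
    have gm: "g \<in> borel_measurable N2" and gi: "integrable M (\<lambda>\<omega>. (g (Y \<omega>))\<^sup>2)"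
      using g unfolding S2_def sq_int_fun_def by auto
    have F: "(\<lambda>\<omega>. f (X \<omega>)) \<in> borel_measurable M" using measurable_compose[OF assms(4) fm] by (simp add: comp_def)
    have G: "(\<lambda>\<omega>. g (Y \<omega>)) \<in> borel_measurable M" using measurable_compose[OF assms(5) gm] by (simp add: comp_def)
    have "expectation (\<lambda>\<omega>. f (X \<omega>) * g (Y \<omega>)) = expectation (\<lambda>\<omega>. f (X \<omega>)) * expectation (\<lambda>\<omega>. g (Y \<omega>))"
      by (rule indep_var_lebesgue_integral[OF indep_comp[OF assms(4,5) fm gm assms(6)] sq_int_int[OF F fi] sq_int_int[OF G gi]])
    then show ?thesis unfolding v1_def v2_def
      by (rule var_decomp[OF assms(2) F G assms(3) fi gi])
  qed
  have set_eq: "{(f, g). sq_int_fun M N1 X f \<and> sq_int_fun M N2 Y g} = S1 \<times> S2"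
    unfolding S1_def S2_def by auto
  have L1: "Lr1 M T N1 X = variance T - (INF f\<in>S1. v1 f)"
    unfolding Lr1_def S1_def v1_def by (rule refl)
  have L2: "Lr1 M T N2 Y = variance T - (INF g\<in>S2. v2 g)"
    unfolding Lr1_def S2_def v2_def by (rule refl)
  have L3: "Lr2 M T N1 X N2 Y = variance T - (INF fg \<in> S1 \<times> S2.
        variance (\<lambda>\<omega>. T \<omega> - fst fg (X \<omega>) - snd fg (Y \<omega>)))"
    unfolding Lr2_def set_eq by (rule refl)
  have I: "(INF fg \<in> S1 \<times> S2.
        variance (\<lambda>\<omega>. T \<omega> - fst fg (X \<omega>) - snd fg (Y \<omega>)))
      = (INF fg \<in> S1 \<times> S2. v1 (fst fg) + v2 (snd fg) - variance T)"
  proof (rule INF_cong[OF refl])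
    fix p assume p: "p \<in> S1 \<times> S2"
    obtain f g where pfg: "p = (f, g)" by (cases p)
    from p have "f \<in> S1" "g \<in> S2" unfolding pfg by blast+
    from dec[OF this] show "variance (\<lambda>\<omega>. T \<omega> - fst p (X \<omega>) - snd p (Y \<omega>)) = v1 (fst p) + v2 (snd p) - variance T"
      unfolding pfg fst_conv snd_conv .
  qed
  have pos1: "0 \<le> v1 f" for f unfolding v1_def by (rule variance_positive)
  have pos2: "0 \<le> v2 g" for g unfolding v2_def by (rule variance_positive)
  have J: "(INF fg \<in> S1 \<times> S2. v1 (fst fg) + v2 (snd fg) - variance T) = (INF f\<in>S1. v1 f) + (INF g\<in>S2. v2 g) - variance T"
    by (rule inf_sum[OF n1 n2 pos1 pos2])
  show ?thesis unfolding L1 L2 L3 I J by linarith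
qed

end
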